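(* Fix an angle $0<\theta\le\pi/8$ and, for an angle $\alpha$, let $\phi_\alpha=\cos(\alpha)|0\rangle+\sin(\alpha)|1\rangle$. Define $\phi_{0,0}=\phi_{-\theta}$, $\phi_{0,1}=\phi_{\theta}$, $\phi_{1,0}=\phi_{\pi/2-\theta}$, $\phi_{1,1}=\phi_{\pi/2+\theta}$. Consider the bit escrow protocol with the reveal challenge: in the deposit step an honest Alice with bit $b$ picks a uniformly random $x\in\{0,1\}$ and sends the qubit $\phi_{b,x}$ to Bob; in the reveal step Alice sends the classical bits $b$ and $x$ to Bob, who measures the deposited qubit in the basis $\{\phi_{0,x},\phi_{1,x}\}$ and sets his result $r_B=b$ if the outcome is $\phi_{b,x}$ and $r_B=err$ otherwise. Then for every $\epsilon\ge 0$ this protocol is $\left(\epsilon,\ \gamma=\frac{2\sqrt{\epsilon}}{\cos(2\theta)}\right)$ binding.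
   Context: Binding is defined for two-step protocols of the following form. Deposit: Alice prepares an arbitrary joint state $\psi_{AB}$ of quantum registers $A$ and $B$ (here $B$ is one qubit) and sends $B$ to Bob, keeping $A$. Reveal: Alice and Bob communicate, Bob follows the protocol honestly and Alice is arbitrary; Alice has one reveal strategy (the "zero strategy") which she uses if she wants to bias the result towards $0$ and another (the "one strategy") for biasing towards $1$, both starting from the same deposited state. Bob decides on a result $r_B\in\{0,1,err\}$. Let $p_0$ (resp. $p_1$) be the probability that, under the zero strategy, Alice claims the bit is $0$ (resp. $1$), and $p_{err}$ the probability that $r_B=err$ under the zero strategy; define $q_0,q_1,q_{err}$ likewise for the one strategy. The protocol is $(\epsilon,\gamma)$ binding if, whenever Bob is honest, for any strategy of Alice, $p_{err}\le\epsilon$ and $q_{err}\le\epsilon$ imply $|p_0-q_0|\le\gamma$ and $|p_1-q_1|\le\gamma$. Classical bits that Alice sends as qubits are measured by Bob in the computational basis. *)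

theory Defs
  imports Complex_Main "HOL-Library.Complex_Order"
begin

text \<open>Qubit computational basis indexed by bool: False = |0>, True = |1>.
  Operators on a finite-dimensional space with basis index type 'i are
  functions 'i \<Rightarrow> 'i \<Rightarrow> complex (matrix entries).\<close>

definition phi :: "real \<Rightarrow> bool \<Rightarrow> real" where
  "phi \<alpha> c = (if c then sin \<alpha> else cos \<alpha>)"

definition escrow_angle :: "real \<Rightarrow> bool \<Rightarrow> bool \<Rightarrow> real" where
  "escrow_angle \<theta> b x =
     (if \<not> b then (if \<not> x then - \<theta> else \<theta>)
      else (if \<not> x then pi/2 - \<theta> else pi/2 + \<theta>))"

definition phi_bx :: "real \<Rightarrow> bool \<Rightarrow> bool \<Rightarrow> bool \<Rightarrow> real" where
  "phi_bx \<theta> b x = phi (escrow_angle \<theta> b x)"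

definition proj :: "(bool \<Rightarrow> real) \<Rightarrow> bool \<Rightarrow> bool \<Rightarrow> complex" where
  "proj v c c' = complex_of_real (v c * v c')"

definition id_op :: "'i \<Rightarrow> 'i \<Rightarrow> complex" where
  "id_op i j = (if i = j then 1 else 0)"

text \<open>Positive semidefinite (complex order: the quadratic form is real and nonnegative).\<close>
definition psd :: "('i::finite \<Rightarrow> 'i \<Rightarrow> complex) \<Rightarrow> bool" where
  "psd A \<longleftrightarrow> (\<forall>v :: 'i \<Rightarrow> complex. 0 \<le> (\<Sum>i\<in>UNIV. \<Sum>j\<in>UNIV. cnj (v i) * A i j * v j))"

definition density_op :: "('i::finite \<Rightarrow> 'i \<Rightarrow> complex) \<Rightarrow> bool" where
  "density_op \<rho> \<longleftrightarrow> psd \<rho> \<and> (\<Sum>i\<in>UNIV. \<rho> i i) = 1"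

text \<open>A POVM on register A with outcomes (b,x) \<in> {0,1}^2 (Alice's claimed bits).\<close>
definition povm4 :: "(bool \<Rightarrow> bool \<Rightarrow> 'a::finite \<Rightarrow> 'a \<Rightarrow> complex) \<Rightarrow> bool" where
  "povm4 M \<longleftrightarrow> (\<forall>b x. psd (M b x)) \<and>
     (\<forall>a a'. (\<Sum>b\<in>UNIV. \<Sum>x\<in>UNIV. M b x a a') = id_op a a')"

text \<open>Re tr[(E \<otimes> F) \<rho>] for a state \<rho> of A \<otimes> B (B a qubit).\<close>
definition joint_prob ::
  "(('a::finite \<times> bool) \<Rightarrow> ('a \<times> bool) \<Rightarrow> complex) \<Rightarrow> ('a \<Rightarrow> 'a \<Rightarrow> complex)
     \<Rightarrow> (bool \<Rightarrow> bool \<Rightarrow> complex) \<Rightarrow> real" where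
  "joint_prob \<rho> E F = Re (\<Sum>a\<in>UNIV. \<Sum>a'\<in>UNIV. \<Sum>c\<in>UNIV. \<Sum>c'\<in>UNIV.
      E a a' * F c c' * \<rho> (a', c') (a, c))"

definition claim_prob ::
  "(('a::finite \<times> bool) \<Rightarrow> ('a \<times> bool) \<Rightarrow> complex) \<Rightarrow> (bool \<Rightarrow> bool \<Rightarrow> 'a \<Rightarrow> 'a \<Rightarrow> complex)
     \<Rightarrow> bool \<Rightarrow> real" where
  "claim_prob \<rho> M b = (\<Sum>x\<in>UNIV. joint_prob \<rho> (M b x) id_op)"

text \<open>Probability that Bob outputs err: Alice announces (b,x), Bob measures B in basis
  {phi_{0,x}, phi_{1,x}} and obtains phi_{not b, x}.\<close>
definition err_prob ::
  "real \<Rightarrow> (('a::finite \<times> bool) \<Rightarrow> ('a \<times> bool) \<Rightarrow> complex) \<Rightarrow> (bool \<Rightarrow> bool \<Rightarrow> 'a \<Rightarrow> 'a \<Rightarrow> complex)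
     \<Rightarrow> real" where
  "err_prob \<theta> \<rho> M = (\<Sum>b\<in>UNIV. \<Sum>x\<in>UNIV. joint_prob \<rho> (M b x) (proj (phi_bx \<theta> (\<not> b) x)))"

end

theory Submission
  imports Defs
begin


definition psdS :: "'i set \<Rightarrow> ('i \<Rightarrow> 'i \<Rightarrow> complex) \<Rightarrow> bool" where
  "psdS S A \<longleftrightarrow> (\<forall>v. 0 \<le> (\<Sum>i\<in>S. \<Sum>j\<in>S. cnj (v i) * A i j * v j))"

lemma psdS_subset:
  assumes "psdS S A" "T \<subseteq> S" "finite S"
  shows "psdS T A"
  unfolding psdS_def
proof
  fix v :: "'a \<Rightarrow> complex"
  define w where "w i = (if i \<in> T then v i else 0)" for i
  have fT: "finite T" using assms finite_subset by blast
  have "(\<Sum>i\<in>S. \<Sum>j\<in>S. cnj (w i) * A i j * w j) = (\<Sum>i\<in>T. \<Sum>j\<in>S. cnj (w i) * A i j * w j)"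
    by (rule sum.mono_neutral_right[OF assms(3) assms(2)]) (simp add: w_def)
  also have "\<dots> = (\<Sum>i\<in>T. \<Sum>j\<in>T. cnj (w i) * A i j * w j)"
    by (intro sum.cong refl sum.mono_neutral_right[OF assms(3) assms(2)]) (simp add: w_def)
  also have "\<dots> = (\<Sum>i\<in>T. \<Sum>j\<in>T. cnj (v i) * A i j * v j)"
    by (intro sum.cong refl) (simp add: w_def)
  finally have eq: "(\<Sum>i\<in>S. \<Sum>j\<in>S. cnj (w i) * A i j * w j) = (\<Sum>i\<in>T. \<Sum>j\<in>T. cnj (v i) * A i j * v j)" .
  have "0 \<le> (\<Sum>i\<in>S. \<Sum>j\<in>S. cnj (w i) * A i j * w j)"
    using assms(1) unfolding psdS_def by (rule spec)
  then show "0 \<le> (\<Sum>i\<in>T. \<Sum>j\<in>T. cnj (v i) * A i j * v j)" using eq by simp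
qed

lemma psdS_two:
  assumes "psdS {i, j} A" "i \<noteq> j"
  shows "\<forall>a b. 0 \<le> cnj a * A i i * a + cnj a * A i j * b + cnj b * A j i * a + cnj b * A j j * b"
proof (intro allI)
  fix a b
  have "0 \<le> (\<Sum>k\<in>{i,j}. \<Sum>l\<in>{i,j}. cnj ((\<lambda>x. if x = i then a else b) k) * A k l * (\<lambda>x. if x = i then a else b) l)"
    using assms(1) unfolding psdS_def by (rule spec)
  then show "0 \<le> cnj a * A i i * a + cnj a * A i j * b + cnj b * A j i * a + cnj b * A j j * b"
    using assms(2) by (simp add: algebra_simps)
qed

lemma psdS_diag:
  assumes "psdS S A" "i \<in> S" "finite S"
  shows "0 \<le> A i i"
proof -
  have "psdS {i} A" using psdS_subset assms by blast
  then have "0 \<le> (\<Sum>k\<in>{i}. \<Sum>l\<in>{i}. cnj ((\<lambda>x. 1) k) * A k l * (\<lambda>x. 1) l)"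
    unfolding psdS_def by (rule spec)
  then show ?thesis by simp
qed

lemma psdS_herm:
  assumes "psdS S A" "i \<in> S" "j \<in> S" "finite S"
  shows "A j i = cnj (A i j)"
proof (cases "i = j")
  case True
  have "0 \<le> A i i" using psdS_diag[OF assms(1,2,4)] .
  then have "Im (A i i) = 0" by (simp add: less_eq_complex_def)
  then show ?thesis using True by (simp add: complex_eq_iff)
next
  case False
  have p: "psdS {i,j} A" using psdS_subset[OF assms(1) _ assms(4)] assms(2,3) by simp
  note h = psdS_two[OF p False]
  have d1: "Im (A i i) = 0" using psdS_diag[OF p] by (simp add: less_eq_complex_def)
  have d2: "Im (A j j) = 0" using psdS_diag[OF p] by (simp add: less_eq_complex_def)
  have "0 \<le> cnj 1 * A i i * 1 + cnj 1 * A i j * 1 + cnj 1 * A j i * 1 + cnj 1 * A j j * 1"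
    using h[rule_format, of 1 1] .
  then have e1: "Im (A i j) + Im (A j i) = 0" using d1 d2 by (simp add: less_eq_complex_def)
  have "0 \<le> cnj 1 * A i i * 1 + cnj 1 * A i j * \<i> + cnj \<i> * A j i * 1 + cnj \<i> * A j j * \<i>"
    using h[rule_format, of 1 "\<i>"] .
  then have e2: "Re (A i j) - Re (A j i) = 0" using d1 d2 by (simp add: less_eq_complex_def)
  show ?thesis using e1 e2 by (simp add: complex_eq_iff)
qed



lemma quad_shift:
  fixes A :: "'i \<Rightarrow> 'i \<Rightarrow> complex"
  assumes "finite S" "k \<in> S"
  shows "(\<Sum>i\<in>S. \<Sum>j\<in>S. cnj (v i + (if i = k then l else 0)) * A i j * (v j + (if j = k then l else 0)))
   = (\<Sum>i\<in>S. \<Sum>j\<in>S. cnj (v i) * A i j * v j) + cnj l * (\<Sum>j\<in>S. A k j * v j)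
     + l * (\<Sum>i\<in>S. cnj (v i) * A i k) + cnj l * l * A k k"
proof -
  have e: "cnj (v i + (if i = k then l else 0)) * A i j * (v j + (if j = k then l else 0))
     = cnj (v i) * A i j * v j + (if i = k then cnj l * (A k j * v j) else 0)
       + (if j = k then l * (cnj (v i) * A i k) else 0)
       + (if i = k then (if j = k then cnj l * l * A k k else 0) else 0)" for i j
    by (auto simp: algebra_simps)
  have s2: "(\<Sum>i\<in>S. \<Sum>j\<in>S. (if i = k then cnj l * (A k j * v j) else 0)) = cnj l * (\<Sum>j\<in>S. A k j * v j)"
  proof -
    have "(\<Sum>i\<in>S. \<Sum>j\<in>S. (if i = k then cnj l * (A k j * v j) else 0))
        = (\<Sum>i\<in>S. (if i = k then (\<Sum>j\<in>S. cnj l * (A k j * v j)) else 0))"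
      by (rule sum.cong) auto
    also have "\<dots> = (\<Sum>j\<in>S. cnj l * (A k j * v j))" using assms by (simp add: sum.delta)
    finally show ?thesis by (simp add: sum_distrib_left)
  qed
  have s3: "(\<Sum>i\<in>S. \<Sum>j\<in>S. (if j = k then l * (cnj (v i) * A i k) else 0)) = l * (\<Sum>i\<in>S. cnj (v i) * A i k)"
    using assms by (simp add: sum.delta sum_distrib_left)
  have s4: "(\<Sum>i\<in>S. \<Sum>j\<in>S. (if i = k then (if j = k then cnj l * l * A k k else 0) else 0)) = cnj l * l * A k k"
  proof -
    have "(\<Sum>i\<in>S. \<Sum>j\<in>S. (if i = k then (if j = k then cnj l * l * A k k else 0) else 0))
        = (\<Sum>i\<in>S. (if i = k then cnj l * l * A k k else 0))"
      using assms by (intro sum.cong) (auto simp: sum.delta)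
    also have "\<dots> = cnj l * l * A k k" using assms by (simp add: sum.delta)
    finally show ?thesis .
  qed
  show ?thesis
    unfolding e sum.distrib s2 s3 s4 ..
qed

lemma psd_decomp:
  assumes "finite S" "psdS S A"
  shows "\<exists>(n::nat) u. (\<forall>l i. i \<notin> S \<longrightarrow> u l i = 0) \<and>
          (\<forall>i\<in>S. \<forall>j\<in>S. A i j = (\<Sum>l<n. u l i * cnj (u l j)))"
  using assms
proof (induction S arbitrary: A rule: finite_induct)
  case empty
  then show ?case by auto
next
  case (insert k F)
  let ?S = "insert k F"
  have fS: "finite ?S" using insert by simp
  have herm: "\<And>i j. i \<in> ?S \<Longrightarrow> j \<in> ?S \<Longrightarrow> A j i = cnj (A i j)"
    by (rule psdS_herm[OF insert.prems _ _ fS])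
  have Akk0: "0 \<le> A k k" by (rule psdS_diag[OF insert.prems insertI1 fS])
  define a where "a = Re (A k k)"
  have Akk: "A k k = complex_of_real a" using Akk0
    by (simp add: a_def less_eq_complex_def complex_eq_iff)
  have a0: "0 \<le> a" using Akk0 by (simp add: a_def less_eq_complex_def)
  show ?case
  proof (cases "a = 0")
    case True
    have zero: "A k j = 0" if j: "j \<in> ?S" for j
    proof (rule ccontr)
      assume nz: "A k j \<noteq> 0"
      then have jk: "k \<noteq> j" using True Akk by auto
      have p: "psdS {k, j} A" by (rule psdS_subset[OF insert.prems _ fS]) (use j in auto)
      define z where "z = A k j"
      define t where "t = (Re (A j j) + 1) / (2 * (norm z)^2)"
      have nz2: "(norm z)^2 > 0" using nz z_def by simp
      have "0 \<le> cnj (- of_real t * z) * A k k * (- of_real t * z) + cnj (- of_real t * z) * A k j * 1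
             + cnj 1 * A j k * (- of_real t * z) + cnj 1 * A j j * 1"
        using psdS_two[OF p jk, rule_format, of "- of_real t * z" 1] .
      also have "\<dots> = - 2 * of_real t * (z * cnj z) + A j j"
        using True Akk herm[OF _ j, of k] by (simp add: z_def algebra_simps)
      also have "\<dots> = of_real (- 2 * t * (norm z)^2) + A j j"
        by (simp only: complex_norm_square[symmetric] of_real_mult of_real_minus of_real_numeral)
      finally have "0 \<le> - 2 * t * (norm z)^2 + Re (A j j)"
        by (simp add: less_eq_complex_def)
      moreover have "2 * t * (norm z)^2 = Re (A j j) + 1" using nz2 by (simp add: t_def)
      ultimately show False by simp
    qed
    have pF: "psdS F A" by (rule psdS_subset[OF insert.prems _ fS]) auto
    obtain n :: nat and u where u1: "\<forall>l i. i \<notin> F \<longrightarrow> u l i = 0"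
      and u2: "\<forall>i\<in>F. \<forall>j\<in>F. A i j = (\<Sum>l<n. u l i * cnj (u l j))"
      using insert.IH[OF pF] by blast
    show ?thesis
    proof (intro exI conjI)
      show "\<forall>l i. i \<notin> ?S \<longrightarrow> u l i = 0" using u1 by auto
      show "\<forall>i\<in>?S. \<forall>j\<in>?S. A i j = (\<Sum>l<n. u l i * cnj (u l j))"
      proof (intro ballI)
        fix i j assume i: "i \<in> ?S" and j: "j \<in> ?S"
        show "A i j = (\<Sum>l<n. u l i * cnj (u l j))"
        proof (cases "i = k \<or> j = k")
          case True
          have "A i j = 0"
          proof (cases "i = k")
            case True then show ?thesis using zero[OF j] by simp
          next
            case False
            then have jk: "j = k" using \<open>i = k \<or> j = k\<close> by simp
            have "A i j = cnj (A j i)" using herm[OF j i] by simp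
            then show ?thesis using zero[OF i] jk by simp
          qed
          moreover have "(\<Sum>l<n. u l i * cnj (u l j)) = 0"
            using True u1 insert.hyps by auto
          ultimately show ?thesis by simp
        next
          case False
          then show ?thesis using u2 i j by auto
        qed
      qed
    qed
  next
    case False
    then have apos: "a > 0" using a0 by simp
    define r where "r = sqrt a"
    have rpos: "r > 0" using apos by (simp add: r_def)
    have r2: "r * r = a" using a0 by (simp add: r_def)
    define u0 where "u0 i = (if i \<in> ?S then A i k / of_real r else 0)" for i
    define A' where "A' i j = A i j - u0 i * cnj (u0 j)" for i j
    have psdA': "psdS ?S A'"
      unfolding psdS_def
    proof
      fix v :: "'a \<Rightarrow> complex"
      define \<beta> where "\<beta> = (\<Sum>i\<in>?S. cnj (v i) * A i k)"
      define lam where "lam = - cnj \<beta> / of_real a"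
      have s1: "(\<Sum>j\<in>?S. A k j * v j) = cnj \<beta>"
      proof -
        have "cnj \<beta> = (\<Sum>j\<in>?S. cnj (cnj (v j) * A j k))" by (simp add: \<beta>_def cnj_sum)
        also have "\<dots> = (\<Sum>j\<in>?S. A k j * v j)"
        proof (rule sum.cong[OF refl])
          fix j assume j: "j \<in> ?S"
          have "A k j = cnj (A j k)" using herm[OF j insertI1] .
          then show "cnj (cnj (v j) * A j k) = A k j * v j" by simp
        qed
        finally show ?thesis by simp
      qed
      have q: "(\<Sum>i\<in>?S. \<Sum>j\<in>?S. cnj (v i + (if i = k then lam else 0)) * A i j * (v j + (if j = k then lam else 0)))
        = (\<Sum>i\<in>?S. \<Sum>j\<in>?S. cnj (v i) * A i j * v j) - \<beta> * cnj \<beta> / of_real a"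
      proof -
        have cl: "cnj lam = - \<beta> / of_real a" by (simp add: lam_def)
        have an: "(of_real a :: complex) \<noteq> 0" using apos by simp
        have h: "cnj lam * cnj \<beta> + (lam * \<beta> + cnj lam * lam * of_real a) = - (\<beta> * cnj \<beta> / of_real a)"
          unfolding cl lam_def using an by (simp add: field_simps)
        show ?thesis
          unfolding quad_shift[OF fS insertI1] s1 \<beta>_def[symmetric] Akk
          by (simp only: add.assoc h diff_conv_add_uminus)
      qed
      have rr: "of_real r * of_real r = (of_real a :: complex)" using r2 by (metis of_real_mult)
      have bb: "\<beta> / of_real r * (cnj \<beta> / of_real r) = \<beta> * cnj \<beta> / of_real a"
        by (simp add: rr flip: times_divide_times_eq)
      have "(\<Sum>i\<in>?S. \<Sum>j\<in>?S. cnj (v i) * A' i j * v j)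
         = (\<Sum>i\<in>?S. \<Sum>j\<in>?S. cnj (v i) * A i j * v j) - (\<Sum>i\<in>?S. \<Sum>j\<in>?S. (cnj (v i) * u0 i) * (cnj (u0 j) * v j))"
      proof -
        have "cnj (v i) * A' i j * v j = cnj (v i) * A i j * v j - (cnj (v i) * u0 i) * (cnj (u0 j) * v j)" for i j
          by (simp add: A'_def algebra_simps)
        then show ?thesis by (simp add: sum_subtractf)
      qed
      also have "(\<Sum>i\<in>?S. \<Sum>j\<in>?S. (cnj (v i) * u0 i) * (cnj (u0 j) * v j))
          = (\<Sum>i\<in>?S. cnj (v i) * u0 i) * (\<Sum>j\<in>?S. cnj (u0 j) * v j)"
        by (simp add: sum_product)
      also have "(\<Sum>i\<in>?S. cnj (v i) * u0 i) = \<beta> / of_real r"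
        unfolding \<beta>_def u0_def by (simp add: sum_divide_distrib)
      also have "(\<Sum>j\<in>?S. cnj (u0 j) * v j) = cnj \<beta> / of_real r"
        unfolding \<beta>_def u0_def cnj_sum by (simp add: sum_divide_distrib mult.commute)
      finally have "(\<Sum>i\<in>?S. \<Sum>j\<in>?S. cnj (v i) * A' i j * v j)
         = (\<Sum>i\<in>?S. \<Sum>j\<in>?S. cnj (v i) * A i j * v j) - \<beta> * cnj \<beta> / of_real a"
        by (simp only: bb)
      also have "\<dots> = (\<Sum>i\<in>?S. \<Sum>j\<in>?S. cnj (v i + (if i = k then lam else 0)) * A i j * (v j + (if j = k then lam else 0)))"
        using q by simp
      also have "0 \<le> \<dots>" using insert.prems unfolding psdS_def by (rule spec)
      finally show "0 \<le> (\<Sum>i\<in>?S. \<Sum>j\<in>?S. cnj (v i) * A' i j * v j)" .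
    qed
    have pF: "psdS F A'" by (rule psdS_subset[OF psdA' _ fS]) auto
    obtain n :: nat and u where u1: "\<forall>l i. i \<notin> F \<longrightarrow> u l i = 0"
      and u2: "\<forall>i\<in>F. \<forall>j\<in>F. A' i j = (\<Sum>l<n. u l i * cnj (u l j))"
      using insert.IH[OF pF] by blast
    define u' where "u' l = (if l = n then u0 else u l)" for l
    have Ak: "A' i j = 0" if "i \<in> ?S" "j \<in> ?S" "i = k \<or> j = k" for i j
    proof (rule disjE[OF that(3)])
      assume ik: "i = k"
      have "A' i j = A k j - (A k k / of_real r) * cnj (A j k / of_real r)"
        using that ik by (simp add: A'_def u0_def)
      also have "\<dots> = A k j - of_real (a / (r * r)) * A k j"
        using herm[OF that(2) insertI1] Akk by (simp add: field_simps)
      finally show ?thesis using r2 apos by simp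
    next
      assume jk: "j = k"
      have "A' i j = A i k - (A i k / of_real r) * cnj (A k k / of_real r)"
        using that jk by (simp add: A'_def u0_def)
      also have "\<dots> = A i k - of_real (a / (r * r)) * A i k"
        using Akk by (simp add: field_simps)
      finally show ?thesis using r2 apos by simp
    qed
    show ?thesis
    proof (intro exI conjI)
      show "\<forall>l i. i \<notin> ?S \<longrightarrow> u' l i = 0" using u1 by (auto simp: u'_def u0_def)
      show "\<forall>i\<in>?S. \<forall>j\<in>?S. A i j = (\<Sum>l<Suc n. u' l i * cnj (u' l j))"
      proof (intro ballI)
        fix i j assume i: "i \<in> ?S" and j: "j \<in> ?S"
        have "(\<Sum>l<Suc n. u' l i * cnj (u' l j)) = (\<Sum>l<n. u l i * cnj (u l j)) + u0 i * cnj (u0 j)"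
          by (simp add: u'_def)
        also have "(\<Sum>l<n. u l i * cnj (u l j)) = A' i j"
        proof (cases "i = k \<or> j = k")
          case True
          have "(\<Sum>l<n. u l i * cnj (u l j)) = 0" using True u1 insert.hyps by auto
          then show ?thesis using Ak[OF i j True] by simp
        next
          case False
          then show ?thesis using u2 i j by auto
        qed
        finally show "A i j = (\<Sum>l<Suc n. u' l i * cnj (u' l j))" by (simp add: A'_def)
      qed
    qed
  qed
qed



lemma psd2:
  fixes p q m :: real
  assumes "\<forall>a b. 0 \<le> p*a*a + 2*m*a*b + q*b*b"
  shows "0 \<le> p \<and> 0 \<le> q \<and> m^2 \<le> p*q"
proof -
  have p: "0 \<le> p" using spec[OF spec[OF assms, of 1], of 0] by simp
  have q: "0 \<le> q" using spec[OF spec[OF assms, of 0], of 1] by simp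
  have h1: "0 \<le> q * (p*q - m^2)" using spec[OF spec[OF assms, of q], of "-m"]
    by (simp add: algebra_simps power2_eq_square)
  have h2: "0 \<le> p * (p*q - m^2)" using spec[OF spec[OF assms, of m], of "-p"]
    by (simp add: algebra_simps power2_eq_square)
  have h3: "0 \<le> p - 2*m*m + q*m*m" using spec[OF spec[OF assms, of 1], of "-m"]
    by (simp add: algebra_simps)
  have "m^2 \<le> p*q"
  proof (cases "q > 0")
    case True then show ?thesis using h1 by (simp add: zero_le_mult_iff)
  next
    case False
    then have q0: "q = 0" using q by simp
    show ?thesis
    proof (cases "p > 0")
      case True then show ?thesis using h2 by (simp add: zero_le_mult_iff)
    next
      case False
      then have "p = 0" using p by simp
      then show ?thesis using h3 q0 by (simp add: power2_eq_square)
    qed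
  qed
  then show ?thesis using p q by simp
qed

lemma block_ineq:
  fixes p q m a1 a2 :: real
  assumes n: "a1^2 + a2^2 = 1" and psd: "\<forall>a b. 0 \<le> p*a*a + 2*m*a*b + q*b*b"
  defines "s \<equiv> p*a1*a1 + 2*m*a1*a2 + q*a2*a2"
    and "e \<equiv> p*a2*a2 - 2*m*a1*a2 + q*a1*a1"
    and "t \<equiv> -a1*a2*p + (a1^2 - a2^2)*m + a1*a2*q"
  shows "0 \<le> s \<and> 0 \<le> e \<and> s + e = p + q \<and> \<bar>t\<bar> \<le> sqrt s * sqrt e"
proof -
  have s0: "0 \<le> s" unfolding s_def using psd by blast
  have e0: "0 \<le> e" unfolding e_def using spec[OF spec[OF psd, of a2], of "-a1"] by (simp add: algebra_simps)
  have se: "s + e = p + q"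
  proof -
    have "s + e = (p + q) * (a1^2 + a2^2)" unfolding s_def e_def by (simp add: algebra_simps power2_eq_square)
    then show ?thesis using n by simp
  qed
  have id: "s * e - t^2 = (p*q - m^2) * (a1^2 + a2^2)^2"
    unfolding s_def e_def t_def by (simp add: algebra_simps power2_eq_square)
  have "t^2 \<le> s * e" using id n psd2[OF psd] by simp
  then have "sqrt (t^2) \<le> sqrt (s * e)" by (rule real_sqrt_le_mono)
  then have "\<bar>t\<bar> \<le> sqrt s * sqrt e" by (simp add: real_sqrt_mult)
  then show ?thesis using s0 e0 se by simp
qed

lemma cs4:
  fixes a1 a2 a3 a4 b1 b2 b3 b4 :: real
  assumes "0 \<le> a1" "0 \<le> a2" "0 \<le> a3" "0 \<le> a4"
  shows "a1*b1 + a2*b2 + a3*b3 + a4*b4 \<le> sqrt (a1^2+a2^2+a3^2+a4^2) * sqrt (b1^2+b2^2+b3^2+b4^2)"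
proof -
  have "(a1^2+a2^2+a3^2+a4^2) * (b1^2+b2^2+b3^2+b4^2) - (a1*b1 + a2*b2 + a3*b3 + a4*b4)^2
     = (a1*b2-a2*b1)^2 + (a1*b3-a3*b1)^2 + (a1*b4-a4*b1)^2 + (a2*b3-a3*b2)^2 + (a2*b4-a4*b2)^2 + (a3*b4-a4*b3)^2"
    by (simp add: algebra_simps power2_eq_square)
  then have "(a1*b1 + a2*b2 + a3*b3 + a4*b4)^2 \<le> (a1^2+a2^2+a3^2+a4^2) * (b1^2+b2^2+b3^2+b4^2)"
    by (smt (verit) zero_le_power2)
  then have "sqrt ((a1*b1 + a2*b2 + a3*b3 + a4*b4)^2) \<le> sqrt ((a1^2+a2^2+a3^2+a4^2) * (b1^2+b2^2+b3^2+b4^2))"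
    by (rule real_sqrt_le_mono)
  then show ?thesis by (simp add: real_sqrt_mult)
qed

lemma core_real:
  fixes C S p1 q1 m1 p2 q2 m2 p3 q3 m3 p4 q4 m4 \<epsilon> :: real
  assumes CS: "C^2 + S^2 = 1" and cpos: "C^2 - S^2 > 0" and vpos: "0 \<le> 2*S*C"
    and ps1: "\<forall>a b. 0 \<le> p1*a*a + 2*m1*a*b + q1*b*b"
    and ps2: "\<forall>a b. 0 \<le> p2*a*a + 2*m2*a*b + q2*b*b"
    and ps3: "\<forall>a b. 0 \<le> p3*a*a + 2*m3*a*b + q3*b*b"
    and ps4: "\<forall>a b. 0 \<le> p4*a*a + 2*m4*a*b + q4*b*b"
    and tr: "p1+q1+p2+q2+p3+q3+p4+q4 = 1"
    and err: "(p1*S*S + 2*m1*S*C + q1*C*C) + (p2*S*S - 2*m2*S*C + q2*C*C)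
            + (p3*C*C - 2*m3*C*S + q3*S*S) + (p4*C*C + 2*m4*C*S + q4*S*S) \<le> \<epsilon>"
  shows "\<bar>(C^2 - S^2) * (p1+q1+p2+q2) - (((C^2 - S^2)+1)/2 * (p1+p2+p3+p4) + ((C^2 - S^2)-1)/2 * (q1+q2+q3+q4))\<bar> \<le> sqrt \<epsilon>"
proof -
  define c where "c = C^2 - S^2"
  define v where "v = 2*S*C"
  define e1 where "e1 = p1*S*S + 2*m1*S*C + q1*C*C"
  define e2 where "e2 = p2*S*S - 2*m2*S*C + q2*C*C"
  define e3 where "e3 = p3*C*C - 2*m3*C*S + q3*S*S"
  define e4 where "e4 = p4*C*C + 2*m4*C*S + q4*S*S"
  define s1 where "s1 = p1*C*C + 2*m1*C*(-S) + q1*(-S)*(-S)"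
  define s2 where "s2 = p2*C*C + 2*m2*C*S + q2*S*S"
  define s3 where "s3 = p3*S*S + 2*m3*S*C + q3*C*C"
  define s4 where "s4 = p4*(-S)*(-S) + 2*m4*(-S)*C + q4*C*C"
  define t1 where "t1 = -C*(-S)*p1 + (C^2 - (-S)^2)*m1 + C*(-S)*q1"
  define t2 where "t2 = -C*S*p2 + (C^2 - S^2)*m2 + C*S*q2"
  define t3 where "t3 = -S*C*p3 + (S^2 - C^2)*m3 + S*C*q3"
  define t4 where "t4 = -(-S)*C*p4 + ((-S)^2 - C^2)*m4 + (-S)*C*q4"
  have n1: "C^2 + (-S)^2 = 1" using CS by simp
  have n3: "S^2 + C^2 = 1" using CS by simp
  have n4: "(-S)^2 + C^2 = 1" using CS by simp
  have b1: "0 \<le> s1 \<and> 0 \<le> e1 \<and> s1 + e1 = p1 + q1 \<and> \<bar>t1\<bar> \<le> sqrt s1 * sqrt e1"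
    using block_ineq[OF n1 ps1] unfolding s1_def e1_def t1_def by (simp add: algebra_simps)
  have b2: "0 \<le> s2 \<and> 0 \<le> e2 \<and> s2 + e2 = p2 + q2 \<and> \<bar>t2\<bar> \<le> sqrt s2 * sqrt e2"
    using block_ineq[OF CS ps2] unfolding s2_def e2_def t2_def by (simp add: algebra_simps)
  have b3: "0 \<le> s3 \<and> 0 \<le> e3 \<and> s3 + e3 = p3 + q3 \<and> \<bar>t3\<bar> \<le> sqrt s3 * sqrt e3"
    using block_ineq[OF n3 ps3] unfolding s3_def e3_def t3_def by (simp add: algebra_simps)
  have b4: "0 \<le> s4 \<and> 0 \<le> e4 \<and> s4 + e4 = p4 + q4 \<and> \<bar>t4\<bar> \<le> sqrt s4 * sqrt e4"
    using block_ineq[OF n4 ps4] unfolding s4_def e4_def t4_def by (simp add: algebra_simps)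
  define E where "E = e1 + e2 + e3 + e4"
  have E0: "0 \<le> E" using b1 b2 b3 b4 by (simp add: E_def)
  have E1: "E \<le> 1" using b1 b2 b3 b4 tr by (simp add: E_def)
  have Ee: "E \<le> \<epsilon>" using err by (simp add: E_def e1_def e2_def e3_def e4_def)
  have sS: "s1 + s2 + s3 + s4 = 1 - E" using b1 b2 b3 b4 tr by (simp add: E_def)
  have key: "c * (p1+q1+p2+q2) - ((c+1)/2 * (p1+p2+p3+p4) + (c-1)/2 * (q1+q2+q3+q4))
     = c * (e1 + e2 - e3 - e4) - v*t1 + v*t2 + v*t3 - v*t4"
    unfolding c_def v_def e1_def e2_def e3_def e4_def t1_def t2_def t3_def t4_def
    using CS by algebra
  have T: "\<bar>t1\<bar> + \<bar>t2\<bar> + \<bar>t3\<bar> + \<bar>t4\<bar> \<le> sqrt (1 - E) * sqrt E"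
  proof -
    have "\<bar>t1\<bar> + \<bar>t2\<bar> + \<bar>t3\<bar> + \<bar>t4\<bar> \<le> sqrt s1 * sqrt e1 + sqrt s2 * sqrt e2 + sqrt s3 * sqrt e3 + sqrt s4 * sqrt e4"
      using b1 b2 b3 b4 by linarith
    also have "\<dots> \<le> sqrt ((sqrt s1)^2 + (sqrt s2)^2 + (sqrt s3)^2 + (sqrt s4)^2) * sqrt ((sqrt e1)^2 + (sqrt e2)^2 + (sqrt e3)^2 + (sqrt e4)^2)"
      using b1 b2 b3 b4 by (intro cs4) auto
    also have "\<dots> = sqrt (1 - E) * sqrt E"
      using b1 b2 b3 b4 sS by (simp add: E_def)
    finally show ?thesis .
  qed
  have cp: "c > 0" using cpos c_def by simp
  have vp: "v \<ge> 0" using vpos v_def by simp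
  have cv: "c^2 + v^2 = 1"
  proof -
    have "c^2 + v^2 = (C^2 + S^2)^2" unfolding c_def v_def by (simp add: algebra_simps power2_eq_square)
    then show ?thesis using CS by simp
  qed
  have "\<bar>c * (e1 + e2 - e3 - e4) - v*t1 + v*t2 + v*t3 - v*t4\<bar> \<le> c * E + v * (\<bar>t1\<bar> + \<bar>t2\<bar> + \<bar>t3\<bar> + \<bar>t4\<bar>)"
  proof -
    have "\<bar>c * (e1 + e2 - e3 - e4)\<bar> \<le> c * E"
      using b1 b2 b3 b4 cp by (simp add: E_def abs_mult abs_le_iff)
    moreover have "\<bar>v*t1\<bar> = v * \<bar>t1\<bar>" "\<bar>v*t2\<bar> = v * \<bar>t2\<bar>" "\<bar>v*t3\<bar> = v * \<bar>t3\<bar>" "\<bar>v*t4\<bar> = v * \<bar>t4\<bar>"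
      using vp by (simp_all add: abs_mult)
    ultimately show ?thesis by (simp add: algebra_simps) linarith
  qed
  also have "\<dots> \<le> c * E + v * (sqrt (1 - E) * sqrt E)"
    using T vp by (simp add: mult_left_mono)
  also have "\<dots> = sqrt E * (c * sqrt E + v * sqrt (1 - E))"
    using E0 by (simp add: algebra_simps)
  also have "\<dots> \<le> sqrt E * 1"
  proof (rule mult_left_mono)
    have "(c * sqrt E + v * sqrt (1 - E))^2 \<le> (c^2 + v^2) * ((sqrt E)^2 + (sqrt (1-E))^2)"
    proof -
      have "(c^2 + v^2) * ((sqrt E)^2 + (sqrt (1-E))^2) - (c * sqrt E + v * sqrt (1 - E))^2
          = (c * sqrt (1-E) - v * sqrt E)^2" by (simp add: algebra_simps power2_eq_square)
      then show ?thesis using zero_le_power2[of "c * sqrt (1-E) - v * sqrt E"] by linarith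
    qed
    also have "\<dots> = 1" using cv E0 E1 by simp
    finally have "(c * sqrt E + v * sqrt (1 - E))^2 \<le> 1^2" by simp
    then show "c * sqrt E + v * sqrt (1 - E) \<le> 1"
      using abs_le_square_iff[of "c * sqrt E + v * sqrt (1 - E)" 1] by simp
  qed (simp add: E0)
  also have "\<dots> \<le> sqrt \<epsilon>" using Ee by simp
  finally show ?thesis using key by (simp add: c_def v_def)
qed



definition Kmat :: "(('a::finite \<times> bool) \<Rightarrow> ('a \<times> bool) \<Rightarrow> complex) \<Rightarrow> ('a \<Rightarrow> 'a \<Rightarrow> complex) \<Rightarrow> bool \<Rightarrow> bool \<Rightarrow> real" where
  "Kmat \<rho> E c c' = Re (\<Sum>a\<in>UNIV. \<Sum>a'\<in>UNIV. E a a' * \<rho> (a', c') (a, c))"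

lemma swap4:
  "(\<Sum>a\<in>A. \<Sum>b\<in>B. \<Sum>c\<in>C. \<Sum>d\<in>D. f a b c d) = (\<Sum>c\<in>C. \<Sum>d\<in>D. \<Sum>a\<in>A. \<Sum>b\<in>B. f a b c d)"
proof -
  have "(\<Sum>a\<in>A. \<Sum>b\<in>B. \<Sum>c\<in>C. \<Sum>d\<in>D. f a b c d) = (\<Sum>a\<in>A. \<Sum>c\<in>C. \<Sum>b\<in>B. \<Sum>d\<in>D. f a b c d)"
    by (rule sum.cong[OF refl], rule sum.swap)
  also have "\<dots> = (\<Sum>c\<in>C. \<Sum>a\<in>A. \<Sum>b\<in>B. \<Sum>d\<in>D. f a b c d)" by (rule sum.swap)
  also have "\<dots> = (\<Sum>c\<in>C. \<Sum>a\<in>A. \<Sum>d\<in>D. \<Sum>b\<in>B. f a b c d)"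
    by (intro sum.cong refl sum.swap)
  also have "\<dots> = (\<Sum>c\<in>C. \<Sum>d\<in>D. \<Sum>a\<in>A. \<Sum>b\<in>B. f a b c d)"
    by (intro sum.cong refl sum.swap)
  finally show ?thesis .
qed

lemma jp_real:
  "joint_prob \<rho> E (\<lambda>c c'. complex_of_real (f c c')) = (\<Sum>c\<in>UNIV. \<Sum>c'\<in>UNIV. f c c' * Kmat \<rho> E c c')"
proof -
  have "(\<Sum>a\<in>UNIV. \<Sum>a'\<in>UNIV. \<Sum>c\<in>UNIV. \<Sum>c'\<in>UNIV. E a a' * complex_of_real (f c c') * \<rho> (a', c') (a, c))
     = (\<Sum>c\<in>UNIV. \<Sum>c'\<in>UNIV. \<Sum>a\<in>UNIV. \<Sum>a'\<in>UNIV. complex_of_real (f c c') * (E a a' * \<rho> (a', c') (a, c)))"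
    by (subst swap4) (simp add: algebra_simps)
  also have "\<dots> = (\<Sum>c\<in>UNIV. \<Sum>c'\<in>UNIV. complex_of_real (f c c') * (\<Sum>a\<in>UNIV. \<Sum>a'\<in>UNIV. E a a' * \<rho> (a', c') (a, c)))"
    by (simp add: sum_distrib_left)
  finally show ?thesis unfolding joint_prob_def Kmat_def by (simp add: Re_sum)
qed

lemma jp_psd:
  fixes \<rho> :: "('a::finite \<times> bool) \<Rightarrow> ('a \<times> bool) \<Rightarrow> complex"
  assumes "psd \<rho>" "psd E"
  shows "0 \<le> joint_prob \<rho> E (proj w)"
proof -
  have "psdS UNIV \<rho>" using assms(1) unfolding psd_def psdS_def by simp
  then obtain n :: nat and u where u: "\<forall>i\<in>UNIV. \<forall>j\<in>UNIV. \<rho> i j = (\<Sum>l<n. u l i * cnj (u l j))"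
    using psd_decomp[of UNIV \<rho>] by auto
  define y where "y l a = (\<Sum>c\<in>UNIV. complex_of_real (w c) * u l (a, c))" for l a
  have "(\<Sum>a\<in>UNIV. \<Sum>a'\<in>UNIV. \<Sum>c\<in>UNIV. \<Sum>c'\<in>UNIV. E a a' * proj w c c' * \<rho> (a', c') (a, c))
      = (\<Sum>a\<in>UNIV. \<Sum>a'\<in>UNIV. \<Sum>c\<in>UNIV. \<Sum>c'\<in>UNIV. \<Sum>l<n. E a a' * proj w c c' * (u l (a', c') * cnj (u l (a, c))))"
    using u by (simp add: sum_distrib_left)
  also have "\<dots> = (\<Sum>l<n. \<Sum>a\<in>UNIV. \<Sum>a'\<in>UNIV. \<Sum>c\<in>UNIV. \<Sum>c'\<in>UNIV. E a a' * proj w c c' * (u l (a', c') * cnj (u l (a, c))))"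
  proof -
    have "(\<Sum>c\<in>UNIV. \<Sum>c'\<in>UNIV. \<Sum>l<n. g c c' l) = (\<Sum>l<n. \<Sum>c\<in>UNIV. \<Sum>c'\<in>UNIV. g c c' l)" for g :: "bool \<Rightarrow> bool \<Rightarrow> nat \<Rightarrow> complex"
      by (simp add: sum.swap[of _ "{..<n}"])
    then have h: "(\<Sum>a\<in>UNIV. \<Sum>a'\<in>UNIV. \<Sum>c\<in>UNIV. \<Sum>c'\<in>UNIV. \<Sum>l<n. g a a' c c' l) = (\<Sum>l<n. \<Sum>a\<in>UNIV. \<Sum>a'\<in>UNIV. \<Sum>c\<in>UNIV. \<Sum>c'\<in>UNIV. g a a' c c' l)"
      for g :: "'a \<Rightarrow> 'a \<Rightarrow> bool \<Rightarrow> bool \<Rightarrow> nat \<Rightarrow> complex"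
      by (simp add: sum.swap[of _ "{..<n}"])
    show ?thesis by (rule h)
  qed
  also have "\<dots> = (\<Sum>l<n. \<Sum>a\<in>UNIV. \<Sum>a'\<in>UNIV. cnj (y l a) * E a a' * y l a')"
  proof (intro sum.cong refl)
    fix l a a'
    have "cnj (y l a) * E a a' * y l a' = (\<Sum>c\<in>UNIV. complex_of_real (w c) * cnj (u l (a, c))) * E a a' * (\<Sum>c'\<in>UNIV. complex_of_real (w c') * u l (a', c'))"
      by (simp add: y_def cnj_sum)
    also have "\<dots> = (\<Sum>c\<in>UNIV. complex_of_real (w c) * cnj (u l (a, c)) * E a a') * (\<Sum>c'\<in>UNIV. complex_of_real (w c') * u l (a', c'))"
      by (simp add: sum_distrib_right)
    also have "\<dots> = (\<Sum>c\<in>UNIV. \<Sum>c'\<in>UNIV. (complex_of_real (w c) * cnj (u l (a, c)) * E a a') * (complex_of_real (w c') * u l (a', c')))"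
      by (rule sum_product)
    also have "\<dots> = (\<Sum>c\<in>UNIV. \<Sum>c'\<in>UNIV. E a a' * proj w c c' * (u l (a', c') * cnj (u l (a, c))))"
      by (simp add: proj_def algebra_simps)
    finally show "(\<Sum>c\<in>UNIV. \<Sum>c'\<in>UNIV. E a a' * proj w c c' * (u l (a', c') * cnj (u l (a, c)))) = cnj (y l a) * E a a' * y l a'"
      by simp
  qed
  also have "0 \<le> \<dots>"
  proof (rule sum_nonneg)
    fix l assume "l \<in> {..<n}"
    show "0 \<le> (\<Sum>a\<in>UNIV. \<Sum>a'\<in>UNIV. cnj (y l a) * E a a' * y l a')"
      using assms(2) unfolding psd_def by blast
  qed
  finally have "0 \<le> (\<Sum>a\<in>UNIV. \<Sum>a'\<in>UNIV. \<Sum>c\<in>UNIV. \<Sum>c'\<in>UNIV. E a a' * proj w c c' * \<rho> (a', c') (a, c))" .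
  then show ?thesis unfolding joint_prob_def by (simp add: less_eq_complex_def)
qed



lemma proj_real: "proj w = (\<lambda>c c'. complex_of_real (w c * w c'))"
  by (rule ext, rule ext) (simp add: proj_def)

lemma id_real: "(id_op :: bool \<Rightarrow> bool \<Rightarrow> complex) = (\<lambda>c c'. complex_of_real (if c = c' then 1 else 0))"
  by (rule ext, rule ext) (simp add: id_op_def)

lemma Kpsd:
  assumes "psd \<rho>" "psd E"
  shows "\<forall>a b. 0 \<le> Kmat \<rho> E False False*a*a + (Kmat \<rho> E False True + Kmat \<rho> E True False)*a*b
                 + Kmat \<rho> E True True*b*b"
proof (intro allI)
  fix a b :: real
  define w where "w c = (if c then b else a)" for c
  have "0 \<le> joint_prob \<rho> E (proj w)" by (rule jp_psd[OF assms])
  then show "0 \<le> Kmat \<rho> E False False*a*a + (Kmat \<rho> E False True + Kmat \<rho> E True False)*a*b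
                 + Kmat \<rho> E True True*b*b"
    unfolding proj_real jp_real by (simp add: UNIV_bool w_def algebra_simps)
qed

lemma claim_K:
  "claim_prob \<rho> M b = (\<Sum>x\<in>UNIV. Kmat \<rho> (M b x) False False + Kmat \<rho> (M b x) True True)"
  unfolding claim_prob_def id_real jp_real by (simp add: UNIV_bool)

lemma err_K:
  "err_prob \<theta> \<rho> M = (\<Sum>b\<in>UNIV. \<Sum>x\<in>UNIV. \<Sum>c\<in>UNIV. \<Sum>c'\<in>UNIV.
      phi_bx \<theta> (\<not> b) x c * phi_bx \<theta> (\<not> b) x c' * Kmat \<rho> (M b x) c c')"
  unfolding err_prob_def proj_real jp_real by simp

lemma Ksum:
  assumes "povm4 M"
  shows "(\<Sum>b\<in>UNIV. \<Sum>x\<in>UNIV. Kmat \<rho> (M b x) c c') = Re (\<Sum>a\<in>UNIV. \<rho> (a, c') (a, c))"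
proof -
  have "(\<Sum>b\<in>UNIV. \<Sum>x\<in>UNIV. \<Sum>a\<in>UNIV. \<Sum>a'\<in>UNIV. M b x a a' * \<rho> (a', c') (a, c))
      = (\<Sum>a\<in>UNIV. \<Sum>a'\<in>UNIV. \<Sum>b\<in>UNIV. \<Sum>x\<in>UNIV. M b x a a' * \<rho> (a', c') (a, c))"
    by (rule swap4)
  also have "\<dots> = (\<Sum>a\<in>UNIV. \<Sum>a'\<in>UNIV. (\<Sum>b\<in>UNIV. \<Sum>x\<in>UNIV. M b x a a') * \<rho> (a', c') (a, c))"
    by (simp add: sum_distrib_right)
  also have "\<dots> = (\<Sum>a\<in>UNIV. \<Sum>a'\<in>UNIV. id_op a a' * \<rho> (a', c') (a, c))"
    using assms unfolding povm4_def by simp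
  also have "\<dots> = (\<Sum>a\<in>UNIV. \<Sum>a'\<in>UNIV. if a' = a then \<rho> (a', c') (a, c) else 0)"
    by (intro sum.cong refl) (auto simp: id_op_def)
  also have "\<dots> = (\<Sum>a\<in>UNIV. \<rho> (a, c') (a, c))"
    by simp
  finally show ?thesis unfolding Kmat_def by (simp flip: Re_sum)
qed

lemma trace1:
  fixes \<rho> :: "('a::finite \<times> bool) \<Rightarrow> ('a \<times> bool) \<Rightarrow> complex"
  assumes "density_op \<rho>"
  shows "Re (\<Sum>a\<in>UNIV. \<rho> (a, False) (a, False)) + Re (\<Sum>a\<in>UNIV. \<rho> (a, True) (a, True)) = 1"
proof -
  have "(\<Sum>i\<in>UNIV. \<rho> i i) = 1" using assms unfolding density_op_def by blast
  then have "(\<Sum>i\<in>UNIV \<times> UNIV. \<rho> i i) = 1" by simp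
  then have "(\<Sum>a\<in>UNIV. \<Sum>c\<in>UNIV. \<rho> (a, c) (a, c)) = 1"
    by (simp add: sum.cartesian_product)
  then have "(\<Sum>a\<in>UNIV. \<rho> (a, False) (a, False)) + (\<Sum>a\<in>UNIV. \<rho> (a, True) (a, True)) = 1"
    by (simp add: UNIV_bool sum.distrib)
  then show ?thesis by (metis Re_sum one_complex.sel plus_complex.sel(1))
qed



lemma phi_vals:
  "phi_bx \<theta> True False False = sin \<theta>" "phi_bx \<theta> True False True = cos \<theta>"
  "phi_bx \<theta> True True False = - sin \<theta>" "phi_bx \<theta> True True True = cos \<theta>"
  "phi_bx \<theta> False False False = cos \<theta>" "phi_bx \<theta> False False True = - sin \<theta>"
  "phi_bx \<theta> False True False = cos \<theta>" "phi_bx \<theta> False True True = sin \<theta>"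
  by (simp_all add: phi_bx_def escrow_angle_def phi_def cos_diff sin_diff cos_add sin_add)

lemma strat:
  fixes \<rho> :: "('a::finite \<times> bool) \<Rightarrow> ('a \<times> bool) \<Rightarrow> complex"
  assumes th: "0 < \<theta>" "\<theta> \<le> pi / 8" and dens: "density_op \<rho>" and pv: "povm4 X"
    and er: "err_prob \<theta> \<rho> X \<le> \<epsilon>"
  shows "\<bar>cos (2*\<theta>) * claim_prob \<rho> X False - ((cos (2*\<theta>) + 1)/2 * Re (\<Sum>a\<in>UNIV. \<rho> (a, False) (a, False))
          + (cos (2*\<theta>) - 1)/2 * Re (\<Sum>a\<in>UNIV. \<rho> (a, True) (a, True)))\<bar> \<le> sqrt \<epsilon>"
proof -
  define k where "k b x c c' = Kmat \<rho> (X b x) c c'" for b x c c'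
  define C where "C = cos \<theta>"
  define S where "S = sin \<theta>"
  have prho: "psd \<rho>" using dens unfolding density_op_def by blast
  have pX: "psd (X b x)" for b x using pv unfolding povm4_def by blast
  define m where "m b x = (k b x False True + k b x True False)/2" for b x
  have hm: "k b x False True = 2 * m b x - k b x True False" for b x unfolding m_def by (simp add: field_simps)
  have ps: "\<forall>a b'. 0 \<le> k b x False False*a*a + 2*m b x*a*b' + k b x True True*b'*b'" for b x
    using Kpsd[OF prho pX, of b x] unfolding k_def[symmetric] hm by simp
  have CS: "C^2 + S^2 = 1" by (simp add: C_def S_def)
  have c2: "cos (2*\<theta>) = C^2 - S^2" by (simp add: C_def S_def cos_double)
  have cpos: "C^2 - S^2 > 0"
  proof -
    have "cos (2*\<theta>) > 0" using th pi_gt_zero by (intro cos_gt_zero) auto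
    then show ?thesis using c2 by simp
  qed
  have vpos: "0 \<le> 2*S*C"
  proof -
    have "0 < S" unfolding S_def using th pi_gt_zero by (intro sin_gt_zero) auto
    moreover have "0 < C" unfolding C_def using th pi_gt_zero by (intro cos_gt_zero) auto
    ultimately show ?thesis by simp
  qed
  have ks: "(\<Sum>b\<in>UNIV. \<Sum>x\<in>UNIV. k b x c c) = Re (\<Sum>a\<in>UNIV. \<rho> (a, c) (a, c))" for c
    unfolding k_def by (rule Ksum[OF pv])
  have tr: "k False False False False + k False False True True + k False True False False + k False True True True
      + k True False False False + k True False True True + k True True False False + k True True True True = 1"
    using trace1[OF dens] ks[of False] ks[of True] by (simp add: UNIV_bool)
  have err: "(k False False False False*S*S + 2*m False False*S*C + k False False True True*C*C)
     + (k False True False False*S*S - 2*m False True*S*C + k False True True True*C*C)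
     + (k True False False False*C*C - 2*m True False*C*S + k True False True True*S*S)
     + (k True True False False*C*C + 2*m True True*C*S + k True True True True*S*S) \<le> \<epsilon>"
  proof -
    have "err_prob \<theta> \<rho> X = (k False False False False*S*S + 2*m False False*S*C + k False False True True*C*C)
     + (k False True False False*S*S - 2*m False True*S*C + k False True True True*C*C)
     + (k True False False False*C*C - 2*m True False*C*S + k True False True True*S*S)
     + (k True True False False*C*C + 2*m True True*C*S + k True True True True*S*S)"
      unfolding err_K k_def[symmetric]
      by (simp add: UNIV_bool phi_vals hm C_def[symmetric] S_def[symmetric] algebra_simps)
    then show ?thesis using er by simp
  qed
  note main = core_real[OF CS cpos vpos ps[of False False] ps[of False True] ps[of True False] ps[of True True] tr err]
  have cl: "claim_prob \<rho> X False = k False False False False + k False False True True + k False True False False + k False True True True"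
    unfolding claim_K k_def by (simp add: UNIV_bool)
  show ?thesis
    using main unfolding c2 cl ks[of False, symmetric] ks[of True, symmetric]
    by (simp add: UNIV_bool algebra_simps)
qed


lemma claim_sum:
  fixes \<rho> :: "('a::finite \<times> bool) \<Rightarrow> ('a \<times> bool) \<Rightarrow> complex"
  assumes "density_op \<rho>" "povm4 X"
  shows "claim_prob \<rho> X False + claim_prob \<rho> X True = 1"
proof -
  have ks: "(\<Sum>b\<in>UNIV. \<Sum>x\<in>UNIV. Kmat \<rho> (X b x) c c) = Re (\<Sum>a\<in>UNIV. \<rho> (a, c) (a, c))" for c
    by (rule Ksum[OF assms(2)])
  show ?thesis using trace1[OF assms(1)] ks[of False] ks[of True]
    unfolding claim_K by (simp add: UNIV_bool)
qed

theorem theorem5: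
  fixes \<theta> \<epsilon> :: real
    and \<rho> :: "('a::finite \<times> bool) \<Rightarrow> ('a \<times> bool) \<Rightarrow> complex"
    and M N :: "bool \<Rightarrow> bool \<Rightarrow> 'a \<Rightarrow> 'a \<Rightarrow> complex"
  assumes "0 < \<theta>" and "\<theta> \<le> pi / 8" and "0 \<le> \<epsilon>"
    and "density_op \<rho>" and "povm4 M" and "povm4 N"
    and "err_prob \<theta> \<rho> M \<le> \<epsilon>" and "err_prob \<theta> \<rho> N \<le> \<epsilon>"
  shows "\<bar>claim_prob \<rho> M False - claim_prob \<rho> N False\<bar> \<le> 2 * sqrt \<epsilon> / cos (2 * \<theta>)
       \<and> \<bar>claim_prob \<rho> M True - claim_prob \<rho> N True\<bar> \<le> 2 * sqrt \<epsilon> / cos (2 * \<theta>)"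
proof -
  have cpos: "cos (2*\<theta>) > 0" using assms(1,2) pi_gt_zero by (intro cos_gt_zero) auto
  note hM = strat[OF assms(1,2,4,5,7)]
  note hN = strat[OF assms(1,2,4,6,8)]
  have "cos (2*\<theta>) * \<bar>claim_prob \<rho> M False - claim_prob \<rho> N False\<bar> \<le> 2 * sqrt \<epsilon>"
  proof -
    have "cos (2*\<theta>) * \<bar>claim_prob \<rho> M False - claim_prob \<rho> N False\<bar>
        = \<bar>cos (2*\<theta>) * claim_prob \<rho> M False - cos (2*\<theta>) * claim_prob \<rho> N False\<bar>"
    proof -
      have "cos (2*\<theta>) * claim_prob \<rho> M False - cos (2*\<theta>) * claim_prob \<rho> N False
          = cos (2*\<theta>) * (claim_prob \<rho> M False - claim_prob \<rho> N False)" by (simp add: algebra_simps)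
      then show ?thesis using cpos by (simp add: abs_mult)
    qed
    then show ?thesis using hM hN by linarith
  qed
  then have d0: "\<bar>claim_prob \<rho> M False - claim_prob \<rho> N False\<bar> \<le> 2 * sqrt \<epsilon> / cos (2 * \<theta>)"
    using cpos by (simp add: field_simps)
  have "claim_prob \<rho> M True - claim_prob \<rho> N True = - (claim_prob \<rho> M False - claim_prob \<rho> N False)"
    using claim_sum[OF assms(4,5)] claim_sum[OF assms(4,6)] by linarith
  then have "\<bar>claim_prob \<rho> M True - claim_prob \<rho> N True\<bar> = \<bar>claim_prob \<rho> M False - claim_prob \<rho> N False\<bar>"
    by simp
  then show ?thesis using d0 by simp
qed

end
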